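(* Let $K$ be a finite simplicial complex, $\mathcal V$ a multivector field on $K$, $N\subseteq K$ a closed set, and let $\mathcal M$ be the minimal Morse decomposition of $\mathrm{inv}_{\mathcal V}(N)$. Let $(P,E)$ be an index pair in $N$ for an isolated invariant set $S$ isolated by $N$. If $\mathcal A$ is a set of multivectors of $\mathcal V$ with $\langle\mathcal A\rangle\subseteq N$, $\langle\mathcal A\rangle\cap E=\emptyset$, $\mathrm{mo}(\langle\mathcal A\rangle)\subseteq P$, and $\langle\mathcal A\rangle\cap M=\emptyset$ for every $M\in\mathcal M$ with $M\not\subseteq S$, then $(P\cup\langle\mathcal A\rangle,E)$ is an index pair in $N$ for $S$.
   Context: $\sigma\le\tau$ means $\sigma$ is a face of $\tau$; $\mathrm{cl}(A)$ is the set of faces of simplices of $A$; $A$ is closed if $A=\mathrm{cl}(A)$; $\mathrm{mo}(A)=\mathrm{cl}(A)\setminus A$. A multivector is a convex subset of $K$ w.r.t. $\le$; a multivector field $\mathcal V$ is a partition of $K$ into multivectors; $[\sigma]_{\mathcal V}$ is the multivector containing $\sigma$. For a set $\mathcal A$ of multivectors, $\langle\mathcal A\rangle=\bigcup_{A\in\mathcal A}A$. $F_{\mathcal V}(\sigma)=[\sigma]_{\mathcal V}\cup\mathrm{cl}(\sigma)$, $F_{\mathcal V}(A)=\bigcup_{\sigma\in A}F_{\mathcal V}(\sigma)$. A path is a finite sequence with $\sigma_j\in F_{\mathcal V}(\sigma_{j-1})$; a solution is a bi-infinite one. A multivector $V$ is critical if $H_k(\mathrm{cl}(V),\mathrm{mo}(V))\ne0$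 for some $k$ (finite field coefficients), regular otherwise. A solution $\rho$ is essential if whenever $[\rho(i)]_{\mathcal V}$ is regular there are $i^-<i<i^+$ with $[\rho(i^\pm)]_{\mathcal V}\ne[\rho(i)]_{\mathcal V}$. $\mathrm{inv}_{\mathcal V}(A)$ is the set of simplices of $A$ lying on an essential solution with image in $A$; $S$ is invariant if $\mathrm{inv}(S)=S$. An invariant set $S$ is isolated by the closed set $N$ if $S$ is a union of multivectors and every path in $N$ with both endpoints in $S$ lies in $S$. A Morse decomposition of an invariant set $S$ is a family of mutually disjoint isolated invariant subsets (Morse sets), indexed by a finite poset, such that every essential solution $\rho$ in $S$ either lies in one Morse set or has $\alpha(\rho)\subseteq M_q$ and $\omega(\rho)\subseteq M_p$ with $q>p$ ($\alpha,\omega$ being the sets of simplices visited infinitely often in the past, resp. future). An isolated invariant set is minimal if its only Morse decomposition is itself; the minimal Morse decomposition is the one all of whose Morse sets are minimal. An index pair in $N$ for $S$ is a pair of closed sets $E\subseteq P\subseteq N$ with: (1) $F_{\mathcal V}(E)\cap N\subseteq E$; (2) $F_{\mathcal V}(P)\cap N\subseteq P$; (3) $F_{\mathcal V}(P\setminus E)\subseteq N$; (4) $S=\mathrm{inv}_{\mathcal V}(P\setminus E)$. *)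

theory Defs
  imports Main
begin

text \<open>Simplices are nonempty finite sets of vertices; the face relation is set inclusion.
  Vertices carry a linear order, used to orient simplices for simplicial homology.\<close>

definition simplicial_complex :: "'a set set \<Rightarrow> bool" where
  "simplicial_complex K \<longleftrightarrow> finite K \<and>
     (\<forall>\<sigma>\<in>K. \<sigma> \<noteq> {} \<and> finite \<sigma> \<and> (\<forall>\<tau>. \<tau> \<noteq> {} \<and> \<tau> \<subseteq> \<sigma> \<longrightarrow> \<tau> \<in> K))"

definition cl :: "'a set set \<Rightarrow> 'a set set \<Rightarrow> 'a set set" where
  "cl K A = {\<sigma>\<in>K. \<exists>\<tau>\<in>A. \<sigma> \<subseteq> \<tau>}"

definition cx_closed :: "'a set set \<Rightarrow> 'a set set \<Rightarrow> bool" where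
  "cx_closed K A \<longleftrightarrow> A \<subseteq> K \<and> cl K A = A"

definition mo :: "'a set set \<Rightarrow> 'a set set \<Rightarrow> 'a set set" where
  "mo K A = cl K A - A"

definition multivector :: "'a set set \<Rightarrow> 'a set set \<Rightarrow> bool" where
  "multivector K A \<longleftrightarrow> A \<subseteq> K \<and>
     (\<forall>\<sigma>\<in>A. \<forall>\<rho>\<in>A. \<forall>\<tau>\<in>K. \<sigma> \<subseteq> \<tau> \<and> \<tau> \<subseteq> \<rho> \<longrightarrow> \<tau> \<in> A)"

definition mvf :: "'a set set \<Rightarrow> 'a set set set \<Rightarrow> bool" where
  "mvf K \<V> \<longleftrightarrow> (\<forall>V\<in>\<V>. V \<noteq> {} \<and> multivector K V) \<and> \<Union>\<V> = K \<and>
     (\<forall>V\<in>\<V>. \<forall>W\<in>\<V>. V \<noteq> W \<longrightarrow> V \<inter> W = {})"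

definition mv_of :: "'a set set set \<Rightarrow> 'a set \<Rightarrow> 'a set set" where
  "mv_of \<V> \<sigma> = (THE V. V \<in> \<V> \<and> \<sigma> \<in> V)"

definition Fmap :: "'a set set \<Rightarrow> 'a set set set \<Rightarrow> 'a set \<Rightarrow> 'a set set" where
  "Fmap K \<V> \<sigma> = mv_of \<V> \<sigma> \<union> cl K {\<sigma>}"

definition FmapS :: "'a set set \<Rightarrow> 'a set set set \<Rightarrow> 'a set set \<Rightarrow> 'a set set" where
  "FmapS K \<V> A = (\<Union>\<sigma>\<in>A. Fmap K \<V> \<sigma>)"

definition is_path :: "'a set set \<Rightarrow> 'a set set set \<Rightarrow> 'a set list \<Rightarrow> bool" where
  "is_path K \<V> xs \<longleftrightarrow> xs \<noteq> [] \<and>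
     (\<forall>i. Suc i < length xs \<longrightarrow> xs ! Suc i \<in> Fmap K \<V> (xs ! i))"

definition is_solution :: "'a set set \<Rightarrow> 'a set set set \<Rightarrow> (int \<Rightarrow> 'a set) \<Rightarrow> bool" where
  "is_solution K \<V> \<rho> \<longleftrightarrow> (\<forall>i. \<rho> i \<in> K \<and> \<rho> (i + 1) \<in> Fmap K \<V> (\<rho> i))"

text \<open>Incidence number [tau : sigma] for the simplicial boundary with vertices oriented by
  the linear order: removing the j-th vertex (0-based) gives sign (-1)^j.\<close>

definition incidence :: "'a::linorder set \<Rightarrow> 'a set \<Rightarrow> 'f::field" where
  "incidence \<tau> \<sigma> = (if \<sigma> \<subseteq> \<tau> \<and> card \<tau> = Suc (card \<sigma>)
      then (- 1) ^ card {v\<in>\<sigma>. v < the_elem (\<tau> - \<sigma>)} else 0)"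

text \<open>H_k(cl V, mo V; F) \<noteq> 0 for some k: the relative chain group C_k(cl V)/C_k(mo V) has as
  basis the k-simplices of cl V - mo V = V; there is a relative k-cycle which is not a
  relative boundary.\<close>

definition critical :: "'f::{field,finite} itself \<Rightarrow> 'a::linorder set set \<Rightarrow> bool" where
  "critical F V \<longleftrightarrow> (\<exists>k (c :: 'a set \<Rightarrow> 'f).
     (\<forall>\<sigma>. c \<sigma> \<noteq> 0 \<longrightarrow> \<sigma> \<in> V \<and> card \<sigma> = Suc k) \<and>
     (\<forall>\<sigma>\<in>V. (\<Sum>\<tau>\<in>{\<tau>\<in>V. card \<tau> = Suc k}. incidence \<tau> \<sigma> * c \<tau>) = 0) \<and>
     \<not> (\<exists>d :: 'a set \<Rightarrow> 'f.
          (\<forall>\<sigma>. d \<sigma> \<noteq> 0 \<longrightarrow> \<sigma> \<in> V \<and> card \<sigma> = Suc (Suc k)) \<and>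
          (\<forall>\<sigma>\<in>V. card \<sigma> = Suc k \<longrightarrow>
              c \<sigma> = (\<Sum>\<tau>\<in>{\<tau>\<in>V. card \<tau> = Suc (Suc k)}. incidence \<tau> \<sigma> * d \<tau>))))"

definition essential ::
  "'f::{field,finite} itself \<Rightarrow> 'a::linorder set set \<Rightarrow> 'a set set set \<Rightarrow> (int \<Rightarrow> 'a set) \<Rightarrow> bool" where
  "essential F K \<V> \<rho> \<longleftrightarrow> is_solution K \<V> \<rho> \<and>
     (\<forall>i. \<not> critical F (mv_of \<V> (\<rho> i)) \<longrightarrow>
        (\<exists>j<i. mv_of \<V> (\<rho> j) \<noteq> mv_of \<V> (\<rho> i)) \<and>
        (\<exists>j>i. mv_of \<V> (\<rho> j) \<noteq> mv_of \<V> (\<rho> i)))"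

definition inv ::
  "'f::{field,finite} itself \<Rightarrow> 'a::linorder set set \<Rightarrow> 'a set set set \<Rightarrow> 'a set set \<Rightarrow> 'a set set" where
  "inv F K \<V> A = {\<sigma>\<in>A. \<exists>\<rho>. essential F K \<V> \<rho> \<and> (\<forall>i. \<rho> i \<in> A) \<and> (\<exists>i. \<rho> i = \<sigma>)}"

definition invariant where
  "invariant F K \<V> S \<longleftrightarrow> inv F K \<V> S = S"

definition isolates ::
  "'f::{field,finite} itself \<Rightarrow> 'a::linorder set set \<Rightarrow> 'a set set set \<Rightarrow> 'a set set \<Rightarrow> 'a set set \<Rightarrow> bool" where
  "isolates F K \<V> N S \<longleftrightarrow> cx_closed K N \<and> invariant F K \<V> S \<and> S \<subseteq> N \<and>
     (\<forall>\<sigma>\<in>S. mv_of \<V> \<sigma> \<subseteq> S) \<and>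
     (\<forall>xs. is_path K \<V> xs \<and> set xs \<subseteq> N \<and> hd xs \<in> S \<and> last xs \<in> S \<longrightarrow> set xs \<subseteq> S)"

definition iso_inv_set where
  "iso_inv_set F K \<V> S \<longleftrightarrow> (\<exists>N. isolates F K \<V> N S)"

definition alpha_set :: "(int \<Rightarrow> 'a) \<Rightarrow> 'a set" where
  "alpha_set \<rho> = {x. infinite {i. i \<le> 0 \<and> \<rho> i = x}}"

definition omega_set :: "(int \<Rightarrow> 'a) \<Rightarrow> 'a set" where
  "omega_set \<rho> = {x. infinite {i. i \<ge> 0 \<and> \<rho> i = x}}"

text \<open>Morse decomposition: a finite family of mutually disjoint nonempty isolated invariant
  subsets, indexed by itself and ordered by a strict partial order r ((Mp,Mq) in r means p < q).\<close>

definition morse_decomp where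
  "morse_decomp F K \<V> S \<M> \<longleftrightarrow> finite \<M> \<and>
     (\<forall>M\<in>\<M>. M \<noteq> {} \<and> M \<subseteq> S \<and> iso_inv_set F K \<V> M) \<and>
     (\<forall>M\<in>\<M>. \<forall>M'\<in>\<M>. M \<noteq> M' \<longrightarrow> M \<inter> M' = {}) \<and>
     (\<exists>r. r \<subseteq> \<M> \<times> \<M> \<and> irrefl r \<and> trans r \<and>
        (\<forall>\<rho>. essential F K \<V> \<rho> \<and> (\<forall>i. \<rho> i \<in> S) \<longrightarrow>
           (\<exists>M\<in>\<M>. \<forall>i. \<rho> i \<in> M) \<or>
           (\<exists>Mp\<in>\<M>. \<exists>Mq\<in>\<M>. (Mp, Mq) \<in> r \<and> alpha_set \<rho> \<subseteq> Mq \<and> omega_set \<rho> \<subseteq> Mp)))"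

definition minimal_iis where
  "minimal_iis F K \<V> S \<longleftrightarrow> iso_inv_set F K \<V> S \<and> (\<forall>\<M>. morse_decomp F K \<V> S \<M> \<longrightarrow> \<M> = {S})"

definition min_morse_decomp where
  "min_morse_decomp F K \<V> S \<M> \<longleftrightarrow> morse_decomp F K \<V> S \<M> \<and> (\<forall>M\<in>\<M>. minimal_iis F K \<V> M)"

definition index_pair where
  "index_pair F K \<V> N S P E \<longleftrightarrow> cx_closed K P \<and> cx_closed K E \<and> E \<subseteq> P \<and> P \<subseteq> N \<and>
     FmapS K \<V> E \<inter> N \<subseteq> E \<and> FmapS K \<V> P \<inter> N \<subseteq> P \<and> FmapS K \<V> (P - E) \<subseteq> N \<and>
     S = inv F K \<V> (P - E)"

end

theory Submission imports Defs begin
lemma inf_le0: "infinite {i::int. i \<le> 0}"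
proof
  assume f: "finite {i::int. i \<le> 0}"
  have ne: "{i::int. i \<le> 0} \<noteq> {}" by auto
  define m where "m = Min {i::int. i \<le> 0}"
  have "m \<in> {i::int. i \<le> 0}" using Min_in[OF f ne] m_def by simp
  hence "m - 1 \<in> {i::int. i \<le> 0}" by simp
  hence "m \<le> m - 1" using Min_le[OF f] m_def by blast
  thus False by simp
qed
lemma inf_ge0: "infinite {i::int. i \<ge> 0}"
proof
  assume f: "finite {i::int. i \<ge> 0}"
  have ne: "{i::int. i \<ge> 0} \<noteq> {}" by auto
  define m where "m = Max {i::int. i \<ge> 0}"
  have "m \<in> {i::int. i \<ge> 0}" using Max_in[OF f ne] m_def by simp
  hence "m + 1 \<in> {i::int. i \<ge> 0}" by simp
  hence "m + 1 \<le> m" using Max_ge[OF f] m_def by blast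
  thus False by simp
qed
lemma inf_below: "infinite {i::int. i \<le> 0 \<and> P i} \<Longrightarrow> \<exists>i\<le>m. P i"
proof (rule ccontr)
  assume a: "infinite {i::int. i \<le> 0 \<and> P i}" "\<not> (\<exists>i\<le>m. P i)"
  hence "{i::int. i \<le> 0 \<and> P i} \<subseteq> {m<..0}" by force
  moreover have "finite {m<..(0::int)}" by simp
  ultimately show False using a(1) finite_subset by blast
qed
lemma inf_above: "infinite {i::int. i \<ge> 0 \<and> P i} \<Longrightarrow> \<exists>i\<ge>m. P i"
proof (rule ccontr)
  assume a: "infinite {i::int. i \<ge> 0 \<and> P i}" "\<not> (\<exists>i\<ge>m. P i)"
  hence "{i::int. i \<ge> 0 \<and> P i} \<subseteq> {0..<m}" by force
  moreover have "finite {0..<(m::int)}" by simp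
  ultimately show False using a(1) finite_subset by blast
qed
lemma alpha_ne: "finite K \<Longrightarrow> \<forall>i. \<rho> i \<in> K \<Longrightarrow> alpha_set \<rho> \<noteq> {}"
proof -
  assume "finite K" "\<forall>i. \<rho> i \<in> K"
  hence "finite (\<rho> ` {i::int. i \<le> 0})" by (meson finite_subset image_subsetI)
  from pigeonhole_infinite[OF inf_le0 this] obtain a0 where
    "infinite {a \<in> {i::int. i \<le> 0}. \<rho> a = \<rho> a0}" by blast
  hence "\<rho> a0 \<in> alpha_set \<rho>" unfolding alpha_set_def by simp
  thus ?thesis by blast
qed
lemma mod_shift:
  fixes T r m :: int
  assumes "0 \<le> r" "r < T"
  shows "(m * T + r) mod T = r"
  using assms by simp

lemma periodic_omega:
  assumes ess: "essential F K \<V> \<rho>" and tail: "\<forall>i\<ge>n0. \<rho> i \<in> B" and om: "\<tau> \<in> omega_set \<rho>"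
  shows "\<tau> \<in> inv F K \<V> B"
proof -
  have infom: "infinite {i. i \<ge> 0 \<and> \<rho> i = \<tau>}" using om unfolding omega_set_def by simp
  obtain a where a: "a \<ge> n0" "\<rho> a = \<tau>"
    using inf_above[OF infom, of n0] by blast
  have sol: "is_solution K \<V> \<rho>" using ess essential_def by blast
  obtain c where c: "c \<ge> a" "mv_of \<V> (\<rho> c) \<noteq> mv_of \<V> (\<rho> a) \<or> (\<forall>c'\<ge>a. mv_of \<V> (\<rho> c') = mv_of \<V> (\<rho> a))"
    by (cases "\<exists>c'\<ge>a. mv_of \<V> (\<rho> c') \<noteq> mv_of \<V> (\<rho> a)") (blast, blast)
  obtain b where b: "b \<ge> c + 1" "\<rho> b = \<tau>"
    using inf_above[OF infom, of "c+1"] by blast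
  define T where "T = b - a"
  have T0: "T > 0" using b c T_def by simp
  define \<rho>' where "\<rho>' = (\<lambda>i. \<rho> (a + i mod T))"
  have rng: "a \<le> a + i mod T" "a + i mod T < b" for i
  proof -
    have "0 \<le> i mod T" "i mod T < T" using T0 by auto
    thus "a \<le> a + i mod T" "a + i mod T < b" using T_def by linarith+
  qed
  have inB: "\<rho>' i \<in> B" for i using rng[of i] a tail unfolding \<rho>'_def by auto
  have step: "\<rho>' (i + 1) = \<rho> (a + i mod T + 1)" for i
  proof (cases "i mod T + 1 = T")
    case True
    have "(i + 1) mod T = (i mod T + 1) mod T" by (simp add: mod_add_left_eq)
    also have "\<dots> = 0" using True by simp
    moreover have "a + i mod T + 1 = b" using True T_def by linarith
    ultimately show ?thesis using a b unfolding \<rho>'_def by simp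
  next
    case False
    have "(i + 1) mod T = (i mod T + 1) mod T" by (simp add: mod_add_left_eq)
    also have "\<dots> = i mod T + 1" proof -
      have "0 \<le> i mod T" "i mod T < T" using T0 by auto
      hence "i mod T + 1 < T" using False by linarith
      thus ?thesis using \<open>0 \<le> i mod T\<close> by simp
    qed
    finally show ?thesis unfolding \<rho>'_def by (simp add: add.assoc)
  qed
  have sol': "is_solution K \<V> \<rho>'"
    unfolding is_solution_def
  proof
    fix i
    have s1: "\<rho> (a + i mod T) \<in> K" "\<rho> ((a + i mod T) + 1) \<in> Fmap K \<V> (\<rho> (a + i mod T))"
      using sol unfolding is_solution_def by blast+
    have e: "\<rho>' i = \<rho> (a + i mod T)" unfolding \<rho>'_def by (rule refl)
    show "\<rho>' i \<in> K \<and> \<rho>' (i + 1) \<in> Fmap K \<V> (\<rho>' i)"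
      unfolding e step[of i] using s1 by (intro conjI)
  qed
  have val: "\<rho>' (m * T + r) = \<rho> (a + r)" if "0 \<le> r" "r < T" for m r
    unfolding \<rho>'_def using that by simp
  have ess': "essential F K \<V> \<rho>'"
    unfolding essential_def
  proof (rule conjI[OF sol'], intro allI impI)
    fix i
    assume nc: "\<not> critical F (mv_of \<V> (\<rho>' i))"
    have diff: "mv_of \<V> (\<rho> c) \<noteq> mv_of \<V> (\<rho> a)"
    proof (rule ccontr)
      assume "\<not> ?thesis"
      hence all: "\<forall>c'\<ge>a. mv_of \<V> (\<rho> c') = mv_of \<V> (\<rho> a)" using c by blast
      have "\<rho>' i = \<rho> (a + i mod T)" unfolding \<rho>'_def by (rule refl)
      hence "mv_of \<V> (\<rho>' i) = mv_of \<V> (\<rho> a)" using rng(1)[of i] all by metis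
      hence "\<not> critical F (mv_of \<V> (\<rho> a))" using nc by simp
      hence "\<exists>j>a. mv_of \<V> (\<rho> j) \<noteq> mv_of \<V> (\<rho> a)" using ess unfolding essential_def by blast
      thus False using all by (meson less_imp_le)
    qed
    have r0: "0 \<le> (0::int)" "0 < T" using T0 by auto
    have r1: "0 \<le> c - a" "c - a < T" using c b T_def by auto
    have lo: "(i div T - 1) * T + r < i" if "r < T" for r
    proof -
      have "(i div T) * T \<le> i" proof -
        have "i = (i div T) * T + i mod T" by simp
        moreover have "0 \<le> i mod T" using T0 by simp
        ultimately show ?thesis by linarith
      qed
      thus ?thesis using that by (simp add: algebra_simps)
    qed
    have hi: "(i div T + 1) * T + r > i" if "0 \<le> r" for r
    proof -
      have "i < (i div T) * T + T" proof -
        have "i = (i div T) * T + i mod T" by simp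
        moreover have "i mod T < T" using T0 by simp
        ultimately show ?thesis by linarith
      qed
      thus ?thesis using that by (simp add: algebra_simps)
    qed
    show "(\<exists>j<i. mv_of \<V> (\<rho>' j) \<noteq> mv_of \<V> (\<rho>' i)) \<and> (\<exists>j>i. mv_of \<V> (\<rho>' j) \<noteq> mv_of \<V> (\<rho>' i))"
    proof (cases "mv_of \<V> (\<rho>' i) = mv_of \<V> (\<rho> a)")
      case True
      have "mv_of \<V> (\<rho>' ((i div T - 1) * T + (c - a))) \<noteq> mv_of \<V> (\<rho>' i)"
           "mv_of \<V> (\<rho>' ((i div T + 1) * T + (c - a))) \<noteq> mv_of \<V> (\<rho>' i)"
        using val[OF r1] diff True by auto
      thus ?thesis using lo[OF r1(2)] hi[OF r1(1)] by blast
    next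
      case False
      have "mv_of \<V> (\<rho>' ((i div T - 1) * T + 0)) \<noteq> mv_of \<V> (\<rho>' i)"
           "mv_of \<V> (\<rho>' ((i div T + 1) * T + 0)) \<noteq> mv_of \<V> (\<rho>' i)"
        using val[OF r0] False by auto
      thus ?thesis using lo[OF r0(2)] hi[OF r0(1)] by blast
    qed
  qed
  have "\<rho>' 0 = \<tau>" unfolding \<rho>'_def using a by simp
  thus ?thesis unfolding inv_def using ess' inB inB[of 0] by blast
qed


lemma omega_ne: "finite K \<Longrightarrow> \<forall>i. \<rho> i \<in> K \<Longrightarrow> omega_set \<rho> \<noteq> {}"
proof -
  assume "finite K" "\<forall>i. \<rho> i \<in> K"
  hence "finite (\<rho> ` {i::int. i \<ge> 0})" by (meson finite_subset image_subsetI)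
  from pigeonhole_infinite[OF inf_ge0 this] obtain a0 where
    "infinite {a \<in> {i::int. i \<ge> 0}. \<rho> a = \<rho> a0}" by blast
  hence "\<rho> a0 \<in> omega_set \<rho>" unfolding omega_set_def by simp
  thus ?thesis by blast
qed

lemma mv_of_eq: "mvf K \<V> \<Longrightarrow> V \<in> \<V> \<Longrightarrow> \<sigma> \<in> V \<Longrightarrow> mv_of \<V> \<sigma> = V"
  unfolding mv_of_def mvf_def by (rule the_equality) blast+

lemma fwd_inv:
  assumes sol: "is_solution K \<V> \<rho>" and inN: "\<forall>i. \<rho> i \<in> N"
    and Pinv: "FmapS K \<V> P \<inter> N \<subseteq> P" and start: "\<rho> i \<in> P" and ij: "i \<le> j"
  shows "\<rho> j \<in> P"
  using ij
proof (induction j rule: int_ge_induct)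
  case base
  then show ?case using start .
next
  case (step k)
  have "\<rho> (k + 1) \<in> Fmap K \<V> (\<rho> k)" using sol unfolding is_solution_def by blast
  hence "\<rho> (k + 1) \<in> FmapS K \<V> P" using step.IH unfolding FmapS_def by blast
  thus ?case using Pinv inN by blast
qed

lemma path_segment:
  assumes sol: "is_solution K \<V> \<rho>" and inN: "\<forall>i. \<rho> i \<in> N"
    and iso: "isolates F K \<V> N S" and js: "\<rho> j \<in> S" and ls: "\<rho> l \<in> S"
    and k: "j \<le> k" "k \<le> l"
  shows "\<rho> k \<in> S"
proof -
  define xs where "xs = map (\<lambda>n. \<rho> (j + int n)) [0..<nat (l - j) + 1]"
  have len: "length xs = nat (l - j) + 1" unfolding xs_def by simp
  have nth: "xs ! n = \<rho> (j + int n)" if "n < length xs" for n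
    using that unfolding xs_def by (simp del: upt_Suc)
  have path: "is_path K \<V> xs"
    unfolding is_path_def
  proof (intro conjI allI impI)
    show "xs \<noteq> []" using len by auto
    fix i assume "Suc i < length xs"
    hence "xs ! Suc i = \<rho> ((j + int i) + 1)" "xs ! i = \<rho> (j + int i)"
      using nth[of "Suc i"] nth[of i] by (simp_all add: ac_simps)
    thus "xs ! Suc i \<in> Fmap K \<V> (xs ! i)" using sol unfolding is_solution_def by simp
  qed
  have setN: "set xs \<subseteq> N" unfolding xs_def using inN by auto
  have "xs \<noteq> []" using len by auto
  hence "hd xs = xs ! 0" by (rule hd_conv_nth)
  hence "hd xs = \<rho> j" using nth[of 0] len by simp
  moreover have "last xs = \<rho> l"
  proof -
    have "last xs = xs ! nat (l - j)" using len
      by (metis add_diff_cancel_right' last_conv_nth list.size(3) nat.distinct(1) Suc_eq_plus1)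
    also have "\<dots> = \<rho> l" using nth[of "nat (l - j)"] len k by simp
    finally show ?thesis .
  qed
  moreover have H: "\<And>xs. is_path K \<V> xs \<Longrightarrow> set xs \<subseteq> N \<Longrightarrow> hd xs \<in> S \<Longrightarrow> last xs \<in> S \<Longrightarrow> set xs \<subseteq> S"
    using iso unfolding isolates_def by blast
  ultimately have "set xs \<subseteq> S" using path setN js ls by simp
  moreover have "\<rho> k \<in> set xs"
  proof -
    have "nat (k - j) < length xs" using len k by simp
    hence "xs ! nat (k - j) \<in> set xs" by simp
    moreover have "xs ! nat (k - j) = \<rho> k" using nth[of "nat (k - j)"] len k by simp
    ultimately show ?thesis by simp
  qed
  ultimately show ?thesis by blast
qed


lemma inv_intro: "essential F K \<V> \<rho> \<Longrightarrow> \<forall>i. \<rho> i \<in> X \<Longrightarrow> \<rho> k \<in> inv F K \<V> X"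
  unfolding inv_def by auto

lemma inv_elim: "\<sigma> \<in> inv F K \<V> X \<Longrightarrow> \<exists>\<rho> k. essential F K \<V> \<rho> \<and> (\<forall>i. \<rho> i \<in> X) \<and> \<rho> k = \<sigma>"
  unfolding inv_def by auto

lemma inv_mono: "X \<subseteq> Y \<Longrightarrow> inv F K \<V> X \<subseteq> inv F K \<V> Y"
proof
  fix \<sigma> assume XY: "X \<subseteq> Y" and "\<sigma> \<in> inv F K \<V> X"
  then obtain \<rho> k where "essential F K \<V> \<rho>" "\<forall>i. \<rho> i \<in> X" "\<rho> k = \<sigma>" using inv_elim by metis
  thus "\<sigma> \<in> inv F K \<V> Y" using inv_intro[of F K \<V> \<rho> Y k] XY by auto
qed

theorem proposition30:
  fixes F :: "'f::{field,finite} itself"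
    and K :: "'a::linorder set set"
    and \<V> :: "'a set set set"
    and N S P E :: "'a set set"
    and \<M> :: "'a set set set"
    and \<A> :: "'a set set set"
  assumes "simplicial_complex K"
    and "mvf K \<V>"
    and "cx_closed K N"
    and "min_morse_decomp F K \<V> (inv F K \<V> N) \<M>"
    and "isolates F K \<V> N S"
    and "index_pair F K \<V> N S P E"
    and "\<A> \<subseteq> \<V>"
    and "\<Union>\<A> \<subseteq> N"
    and "\<Union>\<A> \<inter> E = {}"
    and "mo K (\<Union>\<A>) \<subseteq> P"
    and "\<forall>M\<in>\<M>. \<not> M \<subseteq> S \<longrightarrow> \<Union>\<A> \<inter> M = {}"
  shows "index_pair F K \<V> N S (P \<union> \<Union>\<A>) E"
proof -
  note sc = assms(1) and mv = assms(2) and Nc = assms(3) and mmd = assms(4)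
    and iso = assms(5) and ip = assms(6) and AV = assms(7) and AN = assms(8)
    and AE = assms(9) and moA = assms(10) and MS = assms(11)
  define A where "A = \<Union>\<A>"
  have finK: "finite K" using sc unfolding simplicial_complex_def by blast
  have NK: "N \<subseteq> K" and clN: "cl K N = N" using Nc unfolding cx_closed_def by auto
  have Pc: "P \<subseteq> K" "cl K P = P" and Ec: "cx_closed K E" and EP: "E \<subseteq> P" and PN: "P \<subseteq> N"
    and FE: "FmapS K \<V> E \<inter> N \<subseteq> E" and FP: "FmapS K \<V> P \<inter> N \<subseteq> P"
    and FPE: "FmapS K \<V> (P - E) \<subseteq> N" and Sdef: "S = inv F K \<V> (P - E)"
    using ip unfolding index_pair_def cx_closed_def by auto
  have AN': "A \<subseteq> N" using AN A_def by simp
  have AE': "A \<inter> E = {}" using AE A_def by simp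
  have moA': "mo K A \<subseteq> P" using moA A_def by simp
  have MS': "\<forall>M\<in>\<M>. \<not> M \<subseteq> S \<longrightarrow> A \<inter> M = {}" using MS A_def by simp
  have VA: "V \<subseteq> A" if "V \<in> \<A>" for V using that A_def by blast
  have inA: "\<exists>V\<in>\<A>. \<sigma> \<in> V" if "\<sigma> \<in> A" for \<sigma> using that A_def by blast
  have AK: "A \<subseteq> K" using AN' NK by blast
  have clA: "cl K A \<subseteq> A \<union> P" using moA' unfolding mo_def by blast
  have "cl K A \<subseteq> cl K N" using AN' unfolding cl_def by blast
  hence clAN: "cl K A \<subseteq> N" using clN by simp
  have FA: "Fmap K \<V> \<sigma> \<subseteq> A \<union> cl K A" if sA: "\<sigma> \<in> A" for \<sigma>
  proof -
    obtain V where V: "V \<in> \<A>" "\<sigma> \<in> V" using inA[OF sA] by blast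
    have "mv_of \<V> \<sigma> = V" using mv_of_eq[OF mv _ V(2)] V(1) AV by blast
    hence "mv_of \<V> \<sigma> \<subseteq> A" using VA[OF V(1)] by simp
    moreover have "cl K {\<sigma>} \<subseteq> cl K A" using sA unfolding cl_def by blast
    ultimately show ?thesis unfolding Fmap_def by blast
  qed
  have FSA: "FmapS K \<V> A \<subseteq> A \<union> cl K A" using FA unfolding FmapS_def by blast
  have FSun: "FmapS K \<V> (X \<union> Y) = FmapS K \<V> X \<union> FmapS K \<V> Y" for X Y
    unfolding FmapS_def by blast
  have c1: "cx_closed K (P \<union> A)"
  proof -
    have "cl K (P \<union> A) = cl K P \<union> cl K A" unfolding cl_def by blast
    moreover have "A \<subseteq> cl K A" using AK unfolding cl_def by blast
    ultimately show ?thesis unfolding cx_closed_def using Pc AK clA by blast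
  qed
  have c2: "FmapS K \<V> (P \<union> A) \<inter> N \<subseteq> P \<union> A"
  proof -
    have "FmapS K \<V> (P \<union> A) \<inter> N \<subseteq> (FmapS K \<V> P \<inter> N) \<union> FmapS K \<V> A" unfolding FSun by blast
    also have "\<dots> \<subseteq> P \<union> (A \<union> cl K A)" using FP FSA by (rule Un_mono)
    also have "\<dots> \<subseteq> P \<union> A" using clA by blast
    finally show ?thesis .
  qed
  have PAE: "P \<union> A - E = (P - E) \<union> A" using AE' by blast
  have c3: "FmapS K \<V> (P \<union> A - E) \<subseteq> N"
  proof -
    have "FmapS K \<V> (P \<union> A - E) = FmapS K \<V> (P - E) \<union> FmapS K \<V> A" unfolding PAE FSun ..
    also have "\<dots> \<subseteq> N \<union> (A \<union> cl K A)" using FPE FSA by (rule Un_mono)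
    also have "\<dots> \<subseteq> N" using AN' clAN by blast
    finally show ?thesis .
  qed
  have c4: "S = inv F K \<V> (P \<union> A - E)"
  proof
    show "S \<subseteq> inv F K \<V> (P \<union> A - E)" unfolding Sdef by (rule inv_mono) blast
  next
    show "inv F K \<V> (P \<union> A - E) \<subseteq> S"
    proof
      fix \<sigma> assume "\<sigma> \<in> inv F K \<V> (P \<union> A - E)"
      then obtain \<rho> k where ess: "essential F K \<V> \<rho>" and rin: "\<forall>i. \<rho> i \<in> P \<union> A - E"
        and k: "\<rho> k = \<sigma>" using inv_elim by metis
      have sol: "is_solution K \<V> \<rho>" using ess unfolding essential_def by blast
      have rK: "\<forall>i. \<rho> i \<in> K" using sol unfolding is_solution_def by blast
      have rN: "\<forall>i. \<rho> i \<in> N" using rin PN AN' by blast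
      show "\<sigma> \<in> S"
      proof (cases "\<forall>i. \<rho> i \<in> P")
        case True
        hence "\<forall>i. \<rho> i \<in> P - E" using rin by blast
        thus ?thesis unfolding Sdef using inv_intro[OF ess] k by metis
      next
        case False
        then obtain i0 where i0: "\<rho> i0 \<notin> P" by blast
        have before: "\<rho> i \<in> A" if "i \<le> i0" for i
        proof -
          have "\<rho> i \<notin> P" using fwd_inv[OF sol rN FP _ that] i0 by blast
          thus ?thesis using rin by blast
        qed
        have alA: "alpha_set \<rho> \<subseteq> A"
        proof
          fix x assume "x \<in> alpha_set \<rho>"
          hence "infinite {i. i \<le> 0 \<and> \<rho> i = x}" unfolding alpha_set_def by simp
          then obtain i where "i \<le> i0" "\<rho> i = x" using inf_below[of "\<lambda>i. \<rho> i = x" i0] by blast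
          thus "x \<in> A" using before by blast
        qed
        have alne: "alpha_set \<rho> \<noteq> {}" using alpha_ne[OF finK rK] .
        have rinvN: "\<forall>i. \<rho> i \<in> inv F K \<V> N" using inv_intro[OF ess rN] by blast
        have md: "morse_decomp F K \<V> (inv F K \<V> N) \<M>" using mmd unfolding min_morse_decomp_def by (rule conjunct1)
        hence "\<exists>r. r \<subseteq> \<M> \<times> \<M> \<and> irrefl r \<and> trans r \<and>
        (\<forall>\<rho>. essential F K \<V> \<rho> \<and> (\<forall>i. \<rho> i \<in> inv F K \<V> N) \<longrightarrow>
           (\<exists>M\<in>\<M>. \<forall>i. \<rho> i \<in> M) \<or>
           (\<exists>Mp\<in>\<M>. \<exists>Mq\<in>\<M>. (Mp, Mq) \<in> r \<and> alpha_set \<rho> \<subseteq> Mq \<and> omega_set \<rho> \<subseteq> Mp))"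
          unfolding morse_decomp_def by (rule conjunct2[OF conjunct2[OF conjunct2]])
        then obtain r where "r \<subseteq> \<M> \<times> \<M> \<and> irrefl r \<and> trans r \<and>
        (\<forall>\<rho>. essential F K \<V> \<rho> \<and> (\<forall>i. \<rho> i \<in> inv F K \<V> N) \<longrightarrow>
           (\<exists>M\<in>\<M>. \<forall>i. \<rho> i \<in> M) \<or>
           (\<exists>Mp\<in>\<M>. \<exists>Mq\<in>\<M>. (Mp, Mq) \<in> r \<and> alpha_set \<rho> \<subseteq> Mq \<and> omega_set \<rho> \<subseteq> Mp))" by (elim exE)
        hence r: "\<forall>\<rho>. essential F K \<V> \<rho> \<and> (\<forall>i. \<rho> i \<in> inv F K \<V> N) \<longrightarrow>
           (\<exists>M\<in>\<M>. \<forall>i. \<rho> i \<in> M) \<or>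
           (\<exists>Mp\<in>\<M>. \<exists>Mq\<in>\<M>. (Mp, Mq) \<in> r \<and> alpha_set \<rho> \<subseteq> Mq \<and> omega_set \<rho> \<subseteq> Mp)" by (elim conjE)
        have MA: "M \<subseteq> S" if "M \<in> \<M>" "x \<in> M" "x \<in> A" for M x
          using MS' that by blast
        have "(\<exists>M\<in>\<M>. \<forall>i. \<rho> i \<in> M) \<or>
           (\<exists>Mp\<in>\<M>. \<exists>Mq\<in>\<M>. (Mp, Mq) \<in> r \<and> alpha_set \<rho> \<subseteq> Mq \<and> omega_set \<rho> \<subseteq> Mp)"
          using r ess rinvN by blast
        hence "(\<exists>M\<in>\<M>. \<forall>i. \<rho> i \<in> M) \<or>
           (\<exists>Mp\<in>\<M>. \<exists>Mq\<in>\<M>. alpha_set \<rho> \<subseteq> Mq \<and> omega_set \<rho> \<subseteq> Mp)" by blast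
        thus ?thesis
        proof
          assume "\<exists>M\<in>\<M>. \<forall>i. \<rho> i \<in> M"
          then obtain M where M: "M \<in> \<M>" "\<forall>i. \<rho> i \<in> M" by blast
          have "M \<subseteq> S" using MA[OF M(1) _ before[of i0]] M(2) by blast
          thus ?thesis using M k by blast
        next
          assume "\<exists>Mp\<in>\<M>. \<exists>Mq\<in>\<M>. alpha_set \<rho> \<subseteq> Mq \<and> omega_set \<rho> \<subseteq> Mp"
          then obtain Mp Mq where MM: "Mp \<in> \<M>" "Mq \<in> \<M>" "alpha_set \<rho> \<subseteq> Mq" "omega_set \<rho> \<subseteq> Mp"
            by blast
          have alS: "alpha_set \<rho> \<subseteq> S" using MA[OF MM(2)] MM(3) alA alne by blast
          have omS: "omega_set \<rho> \<subseteq> S"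
          proof (cases "omega_set \<rho> \<inter> A = {}")
            case False
            thus ?thesis using MA[OF MM(1)] MM(4) by blast
          next
            case True
            have fin: "finite {i. i \<ge> 0 \<and> \<rho> i \<in> A}"
            proof -
              have "{i. i \<ge> 0 \<and> \<rho> i \<in> A} = (\<Union>x\<in>A. {i. i \<ge> 0 \<and> \<rho> i = x})" by blast
              moreover have "finite A" using AK finK finite_subset by blast
              moreover have "finite {i. i \<ge> 0 \<and> \<rho> i = x}" if "x \<in> A" for x
                using True that unfolding omega_set_def by blast
              ultimately show ?thesis by simp
            qed
            obtain n0 where n0: "\<forall>i\<ge>n0. \<rho> i \<notin> A"
            proof (cases "{i. i \<ge> 0 \<and> \<rho> i \<in> A} = {}")
              case True
              thus ?thesis using that[of 0] by auto
            next
              case False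
              define m where "m = Max {i. i \<ge> 0 \<and> \<rho> i \<in> A}"
              have "\<forall>i\<ge>m + 1. \<rho> i \<notin> A"
              proof (intro allI impI)
                fix i assume "i \<ge> m + 1"
                moreover have "m \<ge> 0" using Max_in[OF fin False] m_def by simp
                ultimately show "\<rho> i \<notin> A" using Max_ge[OF fin, of i] m_def by force
              qed
              thus ?thesis using that by blast
            qed
            have "\<forall>i\<ge>n0. \<rho> i \<in> P - E" using n0 rin by blast
            hence "omega_set \<rho> \<subseteq> inv F K \<V> (P - E)" using periodic_omega[OF ess] by blast
            thus ?thesis using Sdef by simp
          qed
          obtain x where x: "x \<in> alpha_set \<rho>" using alne by blast
          hence "infinite {i. i \<le> 0 \<and> \<rho> i = x}" unfolding alpha_set_def by simp
          then obtain j where j: "j \<le> k" "\<rho> j = x" using inf_below[of "\<lambda>i. \<rho> i = x" k] by blast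
          obtain y where y: "y \<in> omega_set \<rho>" using omega_ne[OF finK rK] by blast
          hence "infinite {i. i \<ge> 0 \<and> \<rho> i = y}" unfolding omega_set_def by simp
          then obtain l where l: "l \<ge> k" "\<rho> l = y" using inf_above[of "\<lambda>i. \<rho> i = y" k] by blast
          have "\<rho> k \<in> S" using path_segment[OF sol rN iso _ _ j(1) l(1)] j l x y alS omS by blast
          thus ?thesis using k by simp
        qed
      qed
    qed
  qed
  have EPA: "E \<subseteq> P \<union> A" using EP by blast
  have PAN: "P \<union> A \<subseteq> N" using PN AN' by blast
  show ?thesis unfolding index_pair_def A_def[symmetric]
    by (intro conjI c1 Ec EPA PAN FE c2 c3 c4)
qed

end
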